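(* Let $k,n\in\mathbb N^+$ and $\mathbf C=(c_0,\dots,c_k)\in\{0,1\}^{k+1}$. For every integer $m\ge c_k-1$, $$O_{\mathbf C}(n+1,m+1)=n^kF_{n+1}(\mathbf C)\,O_{\mathbf C}(n,m)+n^kF_{n+1}(\mathbf C')\,O_{\mathbf C}(n,m+1),$$ and the boundary values are $O_{\mathbf C}(n,m)=0$ whenever $m=c_k-1$ or $m>c_k-1+n$, and $O_{\mathbf C}(1,c_k)=1$.
   Context: Fix integers $k\ge 1$, $n\ge 1$ and a vector $\mathbf C=(c_0,c_1,\dots,c_k)\in\{0,1\}^{k+1}$; put $\mathbf C'=(1,\dots,1)-\mathbf C$. Consider $k$-tuples $(\pi_1,\dots,\pi_k)$ of permutations of $\{1,\dots,n\}$. A position $\alpha\in\{1,\dots,n\}$ is a record of a permutation $\pi$ if $\pi(\alpha)<\pi(\alpha')$ for every $\alpha'<\alpha$ (position $1$ is always a record); equivalently, records index the minimal elements of the points $(\alpha,\pi(\alpha))$ under strict componentwise domination. For a tuple, let $l_\alpha$ be the number of $\beta\in\{1,\dots,k\}$ for which $\alpha$ is a record of $\pi_\beta$ (so $l_1=k$). The $\mathbf C$ sequential optimization set of the tuple is $S=\{\alpha: c_{l_\alpha}=1\}$, with weight $|S|$. For an integer $m$, $O_{\mathbf C}(n,m)$ is the number of $k$-tuples of permutations of $\{1,\dots,n\}$ whose weight equals $m$ (so it is $0$ for $m<0$ or $m>n$). For $j\ge 2$ and $X=(x_0,\dots,x_k)\in\mathbb R^{k+1}$, $F_j(X)=\sum_{\beta=0}^k\binom{k}{\beta}\frac{x_\beta}{(j-1)^\beta}$.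 *)

theory Defs
  imports "HOL-Combinatorics.Permutations" Complex_Main
begin

definition is_record :: "(nat \<Rightarrow> nat) \<Rightarrow> nat \<Rightarrow> bool" where
  "is_record p a \<longleftrightarrow> (\<forall>a'\<in>{1..<a}. p a < p a')"

definition perm_tuples :: "nat \<Rightarrow> nat \<Rightarrow> (nat \<Rightarrow> nat) list set" where
  "perm_tuples k n = {ps. length ps = k \<and> (\<forall>p\<in>set ps. p permutes {1..n})}"

definition rec_count :: "(nat \<Rightarrow> nat) list \<Rightarrow> nat \<Rightarrow> nat" where
  "rec_count ps a = card {b\<in>{..<length ps}. is_record (ps ! b) a}"

definition seq_opt_set :: "nat list \<Rightarrow> nat \<Rightarrow> (nat \<Rightarrow> nat) list \<Rightarrow> nat set" where
  "seq_opt_set C n ps = {a\<in>{1..n}. C ! rec_count ps a = 1}"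

definition seq_weight :: "nat list \<Rightarrow> nat \<Rightarrow> (nat \<Rightarrow> nat) list \<Rightarrow> nat" where
  "seq_weight C n ps = card (seq_opt_set C n ps)"

definition O_count :: "nat list \<Rightarrow> nat \<Rightarrow> int \<Rightarrow> nat" where
  "O_count C n m = card {ps\<in>perm_tuples (length C - 1) n. int (seq_weight C n ps) = m}"

definition F_fun :: "nat \<Rightarrow> nat list \<Rightarrow> real" where
  "F_fun j X = (\<Sum>b=0..length X - 1. real (((length X - 1) choose b)) * real (X ! b) / (real j - 1) ^ b)"

definition compl_vec :: "nat list \<Rightarrow> nat list" where
  "compl_vec C = map (\<lambda>x. 1 - x) C"

end

theory Submission
  imports Defs
begin


definition rs :: "nat \<Rightarrow> (nat \<Rightarrow> nat) \<Rightarrow> nat \<Rightarrow> nat" where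
  "rs n s a = (if a \<in> {1..n} then (if s a < s (Suc n) then s a else s a - 1) else a)"

lemma perm_facts:
  assumes s: "s permutes {1..Suc n}"
  shows "s (Suc n) \<in> {1..Suc n}" "\<And>a. a \<in> {1..n} \<Longrightarrow> s a \<in> {1..Suc n} \<and> s a \<noteq> s (Suc n)"
proof -
  show "s (Suc n) \<in> {1..Suc n}" using permutes_in_image[OF s] by simp
  fix a assume a: "a \<in> {1..n}"
  show "s a \<in> {1..Suc n} \<and> s a \<noteq> s (Suc n)"
    using permutes_in_image[OF s, of a] a permutes_inj[OF s] by (auto dest: injD)
qed

lemma rs_perm:
  assumes s: "s permutes {1..Suc n}"
  shows "rs n s permutes {1..n}"
proof (rule bij_imp_permutes)
  note pf = perm_facts[OF s]
  have img: "rs n s ` {1..n} \<subseteq> {1..n}"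
  proof
    fix y assume "y \<in> rs n s ` {1..n}"
    then obtain a where a: "a \<in> {1..n}" "y = rs n s a" by auto
    then show "y \<in> {1..n}" using pf(1) pf(2)[OF a(1)] by (auto simp: rs_def)
  qed
  have inj: "inj_on (rs n s) {1..n}"
  proof (rule inj_onI)
    fix a b assume a: "a \<in> {1..n}" and b: "b \<in> {1..n}" and e: "rs n s a = rs n s b"
    have "s a = s b" using e a b pf(2)[OF a] pf(2)[OF b] by (auto simp: rs_def split: if_splits)
    then show "a = b" using permutes_inj[OF s] by (auto dest: injD)
  qed
  show "bij_betw (rs n s) {1..n} {1..n}"
    using img inj endo_inj_surj[of "{1..n}" "rs n s"] by (simp add: bij_betw_def)
  show "rs n s x = x" if "x \<notin> {1..n}" for x using that unfolding rs_def by presburger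
qed

lemma rs_inj: "inj_on (\<lambda>s. (rs n s, s (Suc n))) {s. s permutes {1..Suc n}}"
proof (rule inj_onI)
  fix s t assume s: "s \<in> {s. s permutes {1..Suc n}}" and t: "t \<in> {s. s permutes {1..Suc n}}"
    and e: "(rs n s, s (Suc n)) = (rs n t, t (Suc n))"
  have s': "s permutes {1..Suc n}" and t': "t permutes {1..Suc n}" using s t by auto
  note ps = perm_facts[OF s'] and pt = perm_facts[OF t']
  have v: "s (Suc n) = t (Suc n)" using e by simp
  have r: "rs n s a = rs n t a" for a using e by simp
  show "s = t"
  proof
    fix a
    show "s a = t a"
    proof (cases "a \<in> {1..n}")
      case True
      then show ?thesis using r[of a] v ps(2)[OF True] pt(2)[OF True] by (auto simp: rs_def split: if_splits)
    next
      case False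
      show ?thesis
      proof (cases "a = Suc n")
        case True then show ?thesis using v by simp
      next
        case False2: False
        then have "a \<notin> {1..Suc n}" using False by auto
        then show ?thesis using permutes_not_in[OF s'] permutes_not_in[OF t'] by simp
      qed
    qed
  qed
qed

lemma rs_bij: "bij_betw (\<lambda>s. (rs n s, s (Suc n))) {s. s permutes {1..Suc n}}
   ({t. t permutes {1..n}} \<times> {1..Suc n})"
proof -
  let ?f = "\<lambda>s. (rs n s, s (Suc n))"
  have sub: "?f ` {s. s permutes {1..Suc n}} \<subseteq> {t. t permutes {1..n}} \<times> {1..Suc n}"
    using rs_perm perm_facts(1) by auto
  have c1: "card (?f ` {s. s permutes {1..Suc n}}) = fact (Suc n)"
    using card_image[OF rs_inj[of n]] card_permutations[of "{1..Suc n}" "Suc n"] by simp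
  have c2: "card ({t. t permutes {1..n}} \<times> {1..Suc n}) = fact (Suc n)"
    using card_permutations[of "{1..n}" n] by (simp add: card_cartesian_product)
  have fin: "finite ({t. t permutes {1..n}} \<times> {1..Suc n})"
    using finite_permutations[of "{1..n}"] by simp
  have "?f ` {s. s permutes {1..Suc n}} = {t. t permutes {1..n}} \<times> {1..Suc n}"
    using card_subset_eq[OF fin sub] c1 c2 by simp
  then show ?thesis using rs_inj[of n] by (simp add: bij_betw_def)
qed

lemma rs_sum:
  fixes g :: "(nat \<Rightarrow> nat) \<Rightarrow> nat \<Rightarrow> real"
  shows "(\<Sum>s\<in>{s. s permutes {1..Suc n}}. g (rs n s) (s (Suc n)))
    = (\<Sum>t\<in>{t. t permutes {1..n}}. \<Sum>v\<in>{1..Suc n}. g t v)"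
proof -
  have "(\<Sum>s\<in>{s. s permutes {1..Suc n}}. g (rs n s) (s (Suc n)))
     = (\<Sum>p\<in>{t. t permutes {1..n}} \<times> {1..Suc n}. case_prod g p)"
    using sum.reindex_bij_betw[OF rs_bij[of n], of "case_prod g"] by simp
  also have "\<dots> = (\<Sum>t\<in>{t. t permutes {1..n}}. \<Sum>v\<in>{1..Suc n}. g t v)"
    by (simp only: sum.cartesian_product)
  finally show ?thesis .
qed

lemma rs_record:
  assumes s: "s permutes {1..Suc n}" and a: "a \<in> {1..n}"
  shows "is_record (rs n s) a \<longleftrightarrow> is_record s a"
proof -
  note pf = perm_facts[OF s]
  have "rs n s a < rs n s a' \<longleftrightarrow> s a < s a'" if a': "a' \<in> {1..<a}" for a'
  proof -
    have a'': "a' \<in> {1..n}" using a a' by auto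
    show ?thesis using pf(1) pf(2)[OF a] pf(2)[OF a''] a a'' by (auto simp: rs_def)
  qed
  then show ?thesis unfolding is_record_def by auto
qed

lemma last_record:
  assumes s: "s permutes {1..Suc n}"
  shows "is_record s (Suc n) \<longleftrightarrow> s (Suc n) = 1"
proof
  note pf = perm_facts[OF s]
  assume r: "is_record s (Suc n)"
  show "s (Suc n) = 1"
  proof (rule ccontr)
    assume ne: "s (Suc n) \<noteq> 1"
    have "1 \<in> s ` {1..Suc n}" using permutes_image[OF s] by simp
    then obtain a where a: "a \<in> {1..Suc n}" "s a = 1" by auto
    then have "a \<noteq> Suc n" using ne by auto
    then have "a \<in> {1..<Suc n}" using a by auto
    then show False using r a pf(1) unfolding is_record_def by fastforce
  qed
next
  note pf = perm_facts[OF s]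
  assume "s (Suc n) = 1"
  then show "is_record s (Suc n)" unfolding is_record_def using pf(2) by fastforce
qed




lemma pt_Suc: "perm_tuples (Suc k) m = (\<lambda>(p,ps). p#ps) ` ({p. p permutes {1..m}} \<times> perm_tuples k m)"
  unfolding perm_tuples_def by (force simp: length_Suc_conv)

lemma pt_0: "perm_tuples 0 m = {[]}"
  unfolding perm_tuples_def by auto

lemma pt_inj: "inj_on (\<lambda>(p,ps). p#ps) A"
  by (auto simp: inj_on_def)

lemma pt_fin: "finite (perm_tuples k m)"
  by (induction k) (auto simp: pt_0 pt_Suc finite_permutations)

lemma rec_count_Cons: "rec_count (p#ps) a = (if is_record p a then 1 else 0) + rec_count ps a"
proof -
  have "rec_count qs a = length (filter (\<lambda>p. is_record p a) qs)" for qs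
    unfolding rec_count_def length_filter_conv_card by (simp add: lessThan_def conj_commute)
  then show ?thesis by simp
qed

lemma pascal_sum:
  fixes f :: "nat \<Rightarrow> real" and x :: real
  shows "(\<Sum>b\<le>Suc k. real (Suc k choose b) * x^(Suc k - b) * f b)
       = (\<Sum>b\<le>k. real (k choose b) * x^(k-b) * (f (Suc b) + x * f b))"
proof -
  have L: "(\<Sum>b\<le>Suc k. real (Suc k choose b) * x^(Suc k - b) * f b)
     = x^Suc k * f 0 + (\<Sum>b\<le>k. real (k choose b) * x^(k-b) * f (Suc b))
       + (\<Sum>b\<le>k. real (k choose Suc b) * x^(k-b) * f (Suc b))"
    unfolding sum.atMost_Suc_shift by (simp add: sum.distrib algebra_simps)
  have R2: "(\<Sum>b\<le>k. real (k choose b) * x^(Suc k-b) * f b)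
     = x^Suc k * f 0 + (\<Sum>b\<le>k. real (k choose Suc b) * x^(k-b) * f (Suc b))"
  proof -
    have "(\<Sum>b\<le>k. real (k choose b) * x^(Suc k-b) * f b) = (\<Sum>b\<le>Suc k. real (k choose b) * x^(Suc k-b) * f b)"
      by simp
    also have "\<dots> = x^Suc k * f 0 + (\<Sum>b\<le>k. real (k choose Suc b) * x^(k-b) * f (Suc b))"
      unfolding sum.atMost_Suc_shift by simp
    finally show ?thesis .
  qed
  have R1: "(\<Sum>b\<le>k. real (k choose b) * x^(k-b) * (f (Suc b) + x * f b))
     = (\<Sum>b\<le>k. real (k choose b) * x^(k-b) * f (Suc b)) + (\<Sum>b\<le>k. real (k choose b) * x^(Suc k-b) * f b)"
  proof -
    have "real (k choose b) * x^(k-b) * (f (Suc b) + x * f b)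
        = real (k choose b) * x^(k-b) * f (Suc b) + real (k choose b) * x^(Suc k-b) * f b" if "b \<le> k" for b
      using that by (simp add: Suc_diff_le algebra_simps)
    then show ?thesis by (simp add: sum.distrib)
  qed
  show ?thesis using L R1 R2 by simp
qed

lemma sum_split1:
  fixes \<phi> :: "nat \<Rightarrow> real"
  shows "(\<Sum>v\<in>{1..Suc n}. \<phi> (if v = 1 then 1 else 0)) = \<phi> 1 + real n * \<phi> 0"
proof -
  have e: "{1..Suc n} = insert 1 {2..Suc n}" by auto
  have "(\<Sum>v\<in>{2..Suc n}. \<phi> (if v = 1 then 1 else 0)) = (\<Sum>v\<in>{2..Suc n}. \<phi> 0)"
    by (rule sum.cong) auto
  then show ?thesis unfolding e by simp
qed




lemma main_sum:
  fixes h :: "(nat \<Rightarrow> nat) list \<Rightarrow> nat \<Rightarrow> real"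
  shows "(\<Sum>ps\<in>perm_tuples k (Suc n). h (map (rs n) ps) (rec_count ps (Suc n)))
     = (\<Sum>ts\<in>perm_tuples k n. \<Sum>b\<le>k. real (k choose b) * real n^(k-b) * h ts b)"
proof (induction k arbitrary: h)
  case 0
  then show ?case by (simp add: pt_0 rec_count_def)
next
  case (Suc k)
  let ?P = "\<lambda>m. {p. p permutes {1..m}}"
  let ?e = "\<lambda>v::nat. if v = 1 then 1 else (0::nat)"
  define \<phi> where "\<phi> t e = (\<Sum>ts\<in>perm_tuples k n. \<Sum>b\<le>k. real (k choose b) * real n^(k-b) * h (t # ts) (e + b))" for t e
  have "(\<Sum>ps\<in>perm_tuples (Suc k) (Suc n). h (map (rs n) ps) (rec_count ps (Suc n)))
     = (\<Sum>(s,ps)\<in>?P (Suc n) \<times> perm_tuples k (Suc n). h (rs n s # map (rs n) ps) (?e (s (Suc n)) + rec_count ps (Suc n)))"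
    unfolding pt_Suc
    by (subst sum.reindex[OF pt_inj]) (auto intro!: sum.cong simp: rec_count_Cons last_record)
  also have "\<dots> = (\<Sum>s\<in>?P (Suc n). \<Sum>ps\<in>perm_tuples k (Suc n). h (rs n s # map (rs n) ps) (?e (s (Suc n)) + rec_count ps (Suc n)))"
    by (simp only: sum.cartesian_product)
  also have "\<dots> = (\<Sum>s\<in>?P (Suc n). \<phi> (rs n s) (?e (s (Suc n))))"
    unfolding \<phi>_def by (rule sum.cong[OF refl], rule Suc.IH)
  also have "\<dots> = (\<Sum>t\<in>?P n. \<Sum>v\<in>{1..Suc n}. \<phi> t (?e v))"
    by (rule rs_sum)
  also have "\<dots> = (\<Sum>t\<in>?P n. \<phi> t 1 + real n * \<phi> t 0)"
    by (simp only: sum_split1)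
  also have "\<dots> = (\<Sum>t\<in>?P n. \<Sum>ts\<in>perm_tuples k n. \<Sum>b\<le>Suc k. real (Suc k choose b) * real n^(Suc k-b) * h (t # ts) b)"
    unfolding pascal_sum \<phi>_def
    by (simp add: sum_distrib_left sum.distrib algebra_simps)
  also have "\<dots> = (\<Sum>(t,ts)\<in>?P n \<times> perm_tuples k n. \<Sum>b\<le>Suc k. real (Suc k choose b) * real n^(Suc k-b) * h (t # ts) b)"
    by (rule sum.cartesian_product)
  also have "\<dots> = (\<Sum>ts\<in>perm_tuples (Suc k) n. \<Sum>b\<le>Suc k. real (Suc k choose b) * real n^(Suc k-b) * h ts b)"
    unfolding pt_Suc by (subst sum.reindex[OF pt_inj]) (simp add: case_prod_beta)
  finally show ?case .
qed




lemma card_sum_ind: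
  assumes "finite A"
  shows "real (card {x\<in>A. P x}) = (\<Sum>x\<in>A. if P x then 1 else 0)"
  using assms
proof (induction A rule: finite_induct)
  case empty then show ?case by simp
next
  case (insert a A)
  have "{x\<in>insert a A. P x} = (if P a then insert a {x\<in>A. P x} else {x\<in>A. P x})" by auto
  then show ?case using insert by auto
qed

lemma rec_count_map_rs:
  assumes ps: "ps \<in> perm_tuples k (Suc n)" and a: "a \<in> {1..n}"
  shows "rec_count (map (rs n) ps) a = rec_count ps a"
proof -
  have "{b\<in>{..<length ps}. is_record (map (rs n) ps ! b) a} = {b\<in>{..<length ps}. is_record (ps ! b) a}"
  proof (rule Collect_cong)
    fix b
    show "(b \<in> {..<length ps} \<and> is_record (map (rs n) ps ! b) a) = (b \<in> {..<length ps} \<and> is_record (ps ! b) a)"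
    proof (cases "b < length ps")
      case True
      then have "ps ! b permutes {1..Suc n}" using ps nth_mem unfolding perm_tuples_def by blast
      then show ?thesis using True rs_record[OF _ a] by simp
    qed simp
  qed
  then show ?thesis unfolding rec_count_def by simp
qed

lemma weight_split:
  assumes ps: "ps \<in> perm_tuples k (Suc n)"
  shows "seq_weight C (Suc n) ps = seq_weight C n (map (rs n) ps) + (if C ! rec_count ps (Suc n) = 1 then 1 else 0)"
proof -
  let ?S = "seq_opt_set C n (map (rs n) ps)"
  have e: "seq_opt_set C (Suc n) ps = (if C ! rec_count ps (Suc n) = 1 then insert (Suc n) ?S else ?S)"
    unfolding seq_opt_set_def using rec_count_map_rs[OF ps] by (auto simp: le_Suc_eq)
  have f: "finite ?S" "Suc n \<notin> ?S" unfolding seq_opt_set_def by auto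
  show ?thesis unfolding seq_weight_def e using f by auto
qed

lemma rec_count_1: "rec_count ps 1 = length ps"
  unfolding rec_count_def is_record_def by simp

lemma recursion:
  assumes k: "length C = k + 1" and C: "set C \<subseteq> {0, 1}" and n: "n \<ge> 1"
  shows "real (O_count C (n + 1) (m + 1)) =
              real n ^ k * F_fun (n + 1) C * real (O_count C n m)
              + real n ^ k * F_fun (n + 1) (compl_vec C) * real (O_count C n (m + 1))"
proof -
  have kk: "length C - 1 = k" using k by simp
  have Cb: "C ! b = 0 \<or> C ! b = 1" if "b \<le> k" for b
  proof -
    have "C ! b \<in> set C" using nth_mem[of b C] that k by simp
    then show ?thesis using C by blast
  qed
  define H where "H ts b = (if int (seq_weight C n ts + (if C ! b = 1 then 1 else 0)) = m + 1 then 1 else (0::real))" for ts b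
  define Om where "Om = real (O_count C n m)"
  define Om1 where "Om1 = real (O_count C n (m+1))"
  have Om: "Om = (\<Sum>ts\<in>perm_tuples k n. if int (seq_weight C n ts) = m then 1 else 0)"
    unfolding Om_def O_count_def kk using card_sum_ind[OF pt_fin] by simp
  have Om1: "Om1 = (\<Sum>ts\<in>perm_tuples k n. if int (seq_weight C n ts) = m + 1 then 1 else 0)"
    unfolding Om1_def O_count_def kk using card_sum_ind[OF pt_fin] by simp
  have Hsum: "(\<Sum>ts\<in>perm_tuples k n. H ts b) = real (C ! b) * Om + real (1 - C ! b) * Om1" if "b \<le> k" for b
    using Cb[OF that] unfolding Om Om1 H_def by auto
  have "real (O_count C (n + 1) (m + 1)) = (\<Sum>ps\<in>perm_tuples k (Suc n). if int (seq_weight C (Suc n) ps) = m + 1 then 1 else 0)"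
    unfolding O_count_def kk using card_sum_ind[OF pt_fin] by simp
  also have "\<dots> = (\<Sum>ps\<in>perm_tuples k (Suc n). H (map (rs n) ps) (rec_count ps (Suc n)))"
    unfolding H_def by (rule sum.cong[OF refl]) (simp add: weight_split)
  also have "\<dots> = (\<Sum>ts\<in>perm_tuples k n. \<Sum>b\<le>k. real (k choose b) * real n^(k-b) * H ts b)"
    by (rule main_sum)
  also have "\<dots> = (\<Sum>b\<le>k. real (k choose b) * real n^(k-b) * (\<Sum>ts\<in>perm_tuples k n. H ts b))"
    by (subst sum.swap) (simp add: sum_distrib_left)
  also have "\<dots> = (\<Sum>b\<le>k. real (k choose b) * real n^(k-b) * (real (C ! b) * Om + real (1 - C ! b) * Om1))"
    by (rule sum.cong[OF refl]) (simp add: Hsum)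
  finally have L: "real (O_count C (n + 1) (m + 1)) = \<dots>" .
  have nz: "real n \<noteq> 0" using n by simp
  have F1: "real n ^ k * F_fun (n + 1) C = (\<Sum>b\<le>k. real (k choose b) * real n^(k-b) * real (C ! b))"
    unfolding F_fun_def kk atLeast0AtMost sum_distrib_left
    by (rule sum.cong[OF refl]) (simp add: power_diff[OF nz] field_simps)
  have lc: "length (compl_vec C) - 1 = k" using k by (simp add: compl_vec_def)
  have F2: "real n ^ k * F_fun (n + 1) (compl_vec C) = (\<Sum>b\<le>k. real (k choose b) * real n^(k-b) * real (1 - C ! b))"
    unfolding F_fun_def lc atLeast0AtMost sum_distrib_left
    by (rule sum.cong[OF refl]) (use k in \<open>simp add: power_diff[OF nz] field_simps compl_vec_def\<close>)
  show ?thesis unfolding L F1 F2 Om_def[symmetric] Om1_def[symmetric]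
    by (simp add: sum.distrib sum_distrib_left algebra_simps)
qed




lemma weight_bounds:
  assumes ps: "ps \<in> perm_tuples k n" and k: "length C = k + 1" and C: "set C \<subseteq> {0, 1}" and n: "n \<ge> 1"
  shows "int (C ! k) \<le> int (seq_weight C n ps)" "int (seq_weight C n ps) \<le> int (C ! k) - 1 + int n"
proof -
  have len: "length ps = k" using ps unfolding perm_tuples_def by simp
  have Ck: "C ! k = 0 \<or> C ! k = 1"
  proof -
    have "C ! k \<in> set C" using nth_mem[of k C] k by simp
    then show ?thesis using C by blast
  qed
  let ?S = "seq_opt_set C n ps"
  have sub: "?S \<subseteq> {1..n}" unfolding seq_opt_set_def by auto
  have fin: "finite ?S" using finite_subset[OF sub] by simp
  have one: "1 \<in> ?S \<longleftrightarrow> C ! k = 1" unfolding seq_opt_set_def using n rec_count_1[of ps] len by auto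
  show "int (C ! k) \<le> int (seq_weight C n ps)"
  proof (cases "C ! k = 1")
    case True
    then have "1 \<in> ?S" using one by simp
    then have "card ?S \<ge> 1" using fin by (metis One_nat_def Suc_leI card_gt_0_iff empty_iff)
    then show ?thesis using True unfolding seq_weight_def by simp
  next
    case False then show ?thesis using Ck by simp
  qed
  show "int (seq_weight C n ps) \<le> int (C ! k) - 1 + int n"
  proof (cases "C ! k = 1")
    case True
    have "card ?S \<le> card {1..n}" using card_mono[OF _ sub] by simp
    then show ?thesis using True unfolding seq_weight_def by simp
  next
    case False
    then have n1: "1 \<notin> ?S" using one by simp
    have "?S \<subseteq> {2..n}"
    proof
      fix a assume "a \<in> ?S"
      then have "a \<in> {1..n}" "a \<noteq> 1" using sub n1 by auto
      then show "a \<in> {2..n}" by auto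
    qed
    then have "card ?S \<le> card {2..n}" using card_mono by blast
    then show ?thesis using False Ck n unfolding seq_weight_def by simp
  qed
qed

lemma pt_1: "perm_tuples k 1 = {replicate k id}"
proof -
  have "ps \<in> perm_tuples k 1 \<longleftrightarrow> ps = replicate k id" for ps
  proof
    assume "ps \<in> perm_tuples k 1"
    then have "length ps = k" "\<forall>p\<in>set ps. p = id" unfolding perm_tuples_def by auto
    then show "ps = replicate k id" by (simp add: replicate_eqI)
  next
    assume "ps = replicate k id"
    then show "ps \<in> perm_tuples k 1" unfolding perm_tuples_def by auto
  qed
  then show ?thesis by auto
qed

theorem theorem3p1:
  fixes k n :: nat and C :: "nat list"
  assumes "k \<ge> 1" "n \<ge> 1" "length C = k + 1" "set C \<subseteq> {0, 1}"
  shows "(\<forall>m::int. m \<ge> int (C ! k) - 1 \<longrightarrow>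
            real (O_count C (n + 1) (m + 1)) =
              real n ^ k * F_fun (n + 1) C * real (O_count C n m)
              + real n ^ k * F_fun (n + 1) (compl_vec C) * real (O_count C n (m + 1)))
       \<and> (\<forall>m::int. (m = int (C ! k) - 1 \<or> m > int (C ! k) - 1 + int n) \<longrightarrow> O_count C n m = 0)
       \<and> O_count C 1 (int (C ! k)) = 1"
proof (intro conjI allI impI)
  fix m :: int
  show "real (O_count C (n + 1) (m + 1)) =
              real n ^ k * F_fun (n + 1) C * real (O_count C n m)
              + real n ^ k * F_fun (n + 1) (compl_vec C) * real (O_count C n (m + 1))"
    using recursion assms by blast
next
  fix m :: int
  assume m: "m = int (C ! k) - 1 \<or> m > int (C ! k) - 1 + int n"
  have kk: "length C - 1 = k" using assms by simp
  have e: "{ps \<in> perm_tuples k n. int (seq_weight C n ps) = m} = {}"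
    using weight_bounds[OF _ assms(3,4,2)] m by fastforce
  show "O_count C n m = 0" unfolding O_count_def kk e by simp
next
  have kk: "length C - 1 = k" using assms by simp
  have Ck: "C ! k = 0 \<or> C ! k = 1"
  proof -
    have "C ! k \<in> set C" using nth_mem[of k C] assms(3) by simp
    then show ?thesis using assms(4) by blast
  qed
  have w: "seq_weight C 1 (replicate k id) = C ! k"
  proof -
    have "seq_opt_set C 1 (replicate k id) = (if C ! k = 1 then {1} else {})"
      unfolding seq_opt_set_def using rec_count_1[of "replicate k id"] by auto
    then show ?thesis unfolding seq_weight_def using Ck by auto
  qed
  have e: "{ps \<in> {replicate k id}. int (seq_weight C 1 ps) = int (C ! k)} = {replicate k id}"
    using w by auto
  show "O_count C 1 (int (C ! k)) = 1"
    unfolding O_count_def kk pt_1 e by simp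
qed


end
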